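(* Let the Cholesky factorization of $\bm K_X$ be $\bm K_X=\bm L_X \bm L_X^T$, where $\bm L_X\in \mathbb R^{n\times d}$ ($d\le n$) is a full column-rank matrix, and let $r\le d$. Consider the Equalized-Opportunity fair representation problem $$\sup_{\bm f \in \mathcal A_r} \left\{(1-\lambda)\frac{1}{n^2}\left\|\bm \Theta \bm K_{X} \bm H \bm L_{Y} \right\|^2_F -\lambda\, \frac{1}{n_0^2}\left\|\bm \Theta \bm K_{X}[Y=y_0] \bm H \bm L_{S_0} \right\|^2_F\right\}, \quad 0\le \lambda<1.$$ Then a solution to this problem is $$\bm f^{\text{opt}}(X) = \bm \Theta^{\text{opt}} \left[k_X(\bm x_1, X),\cdots, k_X(\bm x_n, X)\right]^T$$ where $\bm \Theta^{\text{opt}}=\bm U^T \bm L_X^\dagger$ and the columns of $\bm U$ are eigenvectors corresponding to the $r$ largest eigenvalues of the generalized eigenvalue problem $$\left( (1-\lambda) \frac{1}{n^2} \bm L_{X}^T \bm H \bm K_{Y} \bm H \bm L_{X} -\lambda \frac{1}{n_0^2} \bm L_{X}[Y=y_0]^T \bm H \bm K_{S}[Y=y_0] \bm H \bm L_{X}[Y=y_0] \right) \bm u = \tau \left(\frac{1}{n}\,\bm L^T_X \bm H \bm L_X + \gamma \bm I\right) \bm u.$$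
   Context: Setting: $n$ samples $\bm x_1,\dots,\bm x_n$ of data $X$ with target label $Y$ and sensitive attribute $S$. The encoder $\bm f=(f_1,\dots,f_r)$ has components in a universal RKHS $\mathcal H_X$ with kernel $k_X$ and Gram matrix $\bm K_X$, parametrized (representer theorem) as $\bm f(X)=\bm\Theta[k_X(\bm x_1,X),\dots,k_X(\bm x_n,X)]^T$ with $\bm\Theta\in\mathbb R^{r\times n}$. The constraint set is $\mathcal A_r:=\{(f_1,\cdots, f_r) \mid f_i, f_j\in \mathcal H_{X},\, \mathrm{Cov} (f_i(X), f_j(X) )+\gamma\, \langle f_i, f_j\rangle_{\mathcal H_{X}}=\delta_{i,j}\}$, $\gamma>0$. $\bm H = \bm I_n-\frac{1}{n} \bm 1_n \bm 1_n^T$ is the centering matrix; $\bm K_Y=\bm L_Y\bm L_Y^T$ is the Gram matrix of a kernel on $Y$. For Equalized Opportunity, conditioning is on the single label value $Y=y_0$ (the positive class): $n_0$ is the number of samples with $Y=y_0$, $\bm K_X[Y=y_0]$ and $\bm L_X[Y=y_0]$ denote the corresponding rows of $\bm K_X$ and $\bm L_X$ restricted to those samples, $\bm K_S[Y=y_0]=\bm K_{S_0}=\bm L_{S_0}\bm L_{S_0}^T$ is the Gram matrix of a kernel on $S$ over those samples. The two terms are the empirical estimates of $\mathrm{Dep}(\bm f(X),Y)$ and $\mathrm{Dep}(\bm f(X),S\mid Y=y_0)$. $\dagger$ denotes the pseudo-inverse and $\tau$ the generalized eigenvalue. *)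

theory Defs
  imports "Jordan_Normal_Form.Matrix"
begin

definition centering :: "nat \<Rightarrow> real mat" where
  "centering m = 1\<^sub>m m - (1 / real m) \<cdot>\<^sub>m mat m m (\<lambda>_. 1)"

definition frob_sq :: "real mat \<Rightarrow> real" where
  "frob_sq M = (\<Sum>i<dim_row M. \<Sum>j<dim_col M. (M $$ (i, j))\<^sup>2)"

definition full_col_rank :: "real mat \<Rightarrow> bool" where
  "full_col_rank M \<longleftrightarrow> (\<forall>v \<in> carrier_vec (dim_col M). M *\<^sub>v v = 0\<^sub>v (dim_row M) \<longrightarrow> v = 0\<^sub>v (dim_col M))"

definition pinv :: "real mat \<Rightarrow> real mat" where
  "pinv M = (THE P. P \<in> carrier_mat (dim_col M) (dim_row M) \<and> M * P * M = M \<and> P * M * P = P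
               \<and> (M * P)\<^sup>T = M * P \<and> (P * M)\<^sup>T = P * M)"

definition emp_cov :: "nat \<Rightarrow> (nat \<Rightarrow> real) \<Rightarrow> (nat \<Rightarrow> real) \<Rightarrow> real" where
  "emp_cov n a b = (1 / real n) * (\<Sum>k<n. a k * b k)
                   - ((1 / real n) * (\<Sum>k<n. a k)) * ((1 / real n) * (\<Sum>k<n. b k))"

(* f = Theta [k(x_1,.),...,k(x_n,.)]^T belongs to A_r:
   f_i(x_k) = (Theta K)_{ik},  <f_i,f_j>_H = (Theta K Theta^T)_{ij} *)
definition in_A :: "nat \<Rightarrow> nat \<Rightarrow> real \<Rightarrow> real mat \<Rightarrow> real mat \<Rightarrow> bool" where
  "in_A n r \<gamma> K \<Theta> \<longleftrightarrow>
     (\<forall>i<r. \<forall>j<r. emp_cov n (\<lambda>k. (\<Theta> * K) $$ (i, k)) (\<lambda>k. (\<Theta> * K) $$ (j, k))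
                  + \<gamma> * (\<Theta> * K * \<Theta>\<^sup>T) $$ (i, j) = (if i = j then 1 else 0))"

definition pos_idx :: "nat \<Rightarrow> (nat \<Rightarrow> 'b) \<Rightarrow> 'b \<Rightarrow> nat \<Rightarrow> nat" where
  "pos_idx n y y0 i = sorted_list_of_set {k. k < n \<and> y k = y0} ! i"

definition n_pos :: "nat \<Rightarrow> (nat \<Rightarrow> 'b) \<Rightarrow> 'b \<Rightarrow> nat" where
  "n_pos n y y0 = card {k. k < n \<and> y k = y0}"

definition rows_pos :: "nat \<Rightarrow> (nat \<Rightarrow> 'b) \<Rightarrow> 'b \<Rightarrow> real mat \<Rightarrow> real mat" where
  "rows_pos n y y0 M = mat (n_pos n y y0) (dim_col M) (\<lambda>(i, j). M $$ (pos_idx n y y0 i, j))"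

definition cols_pos :: "nat \<Rightarrow> (nat \<Rightarrow> 'b) \<Rightarrow> 'b \<Rightarrow> real mat \<Rightarrow> real mat" where
  "cols_pos n y y0 M = mat (dim_row M) (n_pos n y y0) (\<lambda>(i, j). M $$ (i, pos_idx n y y0 j))"

definition eo_objective ::
  "nat \<Rightarrow> (nat \<Rightarrow> 'b) \<Rightarrow> 'b \<Rightarrow> real \<Rightarrow> real mat \<Rightarrow> real mat \<Rightarrow> real mat \<Rightarrow> real mat \<Rightarrow> real" where
  "eo_objective n y y0 lam K LY LS0 \<Theta> =
     (1 - lam) * (1 / (real n)\<^sup>2) * frob_sq (\<Theta> * K * centering n * LY)
     - lam * (1 / (real (n_pos n y y0))\<^sup>2)
         * frob_sq (\<Theta> * cols_pos n y y0 K * centering (n_pos n y y0) * LS0)"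

definition eo_A ::
  "nat \<Rightarrow> (nat \<Rightarrow> 'b) \<Rightarrow> 'b \<Rightarrow> real \<Rightarrow> real mat \<Rightarrow> real mat \<Rightarrow> real mat \<Rightarrow> real mat" where
  "eo_A n y y0 lam L KY KS0 =
     ((1 - lam) * (1 / (real n)\<^sup>2)) \<cdot>\<^sub>m (L\<^sup>T * centering n * KY * centering n * L)
     - (lam * (1 / (real (n_pos n y y0))\<^sup>2)) \<cdot>\<^sub>m
         ((rows_pos n y y0 L)\<^sup>T * centering (n_pos n y y0) * KS0
            * centering (n_pos n y y0) * rows_pos n y y0 L)"

definition eo_B :: "nat \<Rightarrow> real \<Rightarrow> real mat \<Rightarrow> real mat" where
  "eo_B n \<gamma> L = (1 / real n) \<cdot>\<^sub>m (L\<^sup>T * centering n * L) + \<gamma> \<cdot>\<^sub>m 1\<^sub>m (dim_col L)"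

definition top_gen_eigvecs :: "nat \<Rightarrow> real mat \<Rightarrow> real mat \<Rightarrow> real mat \<Rightarrow> bool" where
  "top_gen_eigvecs r A B U \<longleftrightarrow>
     (let d = dim_row A in
      \<exists>V \<tau>. V \<in> carrier_mat d d \<and> V\<^sup>T * B * V = 1\<^sub>m d
        \<and> (\<forall>j<d. A *\<^sub>v col V j = \<tau> j \<cdot>\<^sub>v (B *\<^sub>v col V j))
        \<and> (\<forall>i j. i \<le> j \<longrightarrow> j < d \<longrightarrow> \<tau> j \<le> \<tau> i)
        \<and> U = mat d r (\<lambda>(i, j). V $$ (i, j)))"

end

theory Submission
  imports Defs "Jordan_Normal_Form.Determinant"
begin


definition mytr :: "real mat \<Rightarrow> real" where
  "mytr M = (\<Sum>i<dim_row M. M $$ (i, i))"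

lemma assoc_dim: "dim_col (A::real mat) = dim_row B \<Longrightarrow> dim_col B = dim_row C \<Longrightarrow> A * B * C = A * (B * C)"
  by (rule assoc_mult_mat[of A "dim_row A" "dim_col A" B "dim_col B" C "dim_col C"]) auto

lemma transpose_mult_dim: "dim_col (A::real mat) = dim_row B \<Longrightarrow> (A * B)\<^sup>T = B\<^sup>T * A\<^sup>T"
  by (rule transpose_mult[of A "dim_row A" "dim_col A" B "dim_col B"]) auto

lemma centering_dims[simp]: "dim_row (centering m) = m" "dim_col (centering m) = m"
  unfolding centering_def by auto

lemma centering_idx: "i < m \<Longrightarrow> j < m \<Longrightarrow> centering m $$ (i,j) = (if i = j then 1 else 0) - 1 / real m"
  unfolding centering_def by auto

lemma centering_sym[simp]: "(centering m)\<^sup>T = centering m"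
  by (rule eq_matI) (auto simp: centering_idx)

lemma frob_tr: "frob_sq M = mytr (M * M\<^sup>T)"
  unfolding frob_sq_def mytr_def
  by (auto simp: scalar_prod_def power2_eq_square intro!: sum.cong)

lemma mytr_minus: "dim_row (A::real mat) = dim_row B \<Longrightarrow> dim_col A = dim_col B \<Longrightarrow> dim_row A = dim_col A
   \<Longrightarrow> mytr (a \<cdot>\<^sub>m A - b \<cdot>\<^sub>m B) = a * mytr A - b * mytr B"
  unfolding mytr_def by (simp add: sum_subtractf sum_distrib_left)

lemma mult_smult_minus_dim:
  fixes P X Y Q :: "real mat"
  assumes "dim_col P = dim_row X" "dim_row X = dim_row Y" "dim_col X = dim_col Y" "dim_col X = dim_row Q"
  shows "P * (a \<cdot>\<^sub>m X - b \<cdot>\<^sub>m Y) * Q = a \<cdot>\<^sub>m (P * X * Q) - b \<cdot>\<^sub>m (P * Y * Q)"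
  using assms
  apply (intro eq_matI)
     apply (simp_all add: scalar_prod_def)
  apply (simp only: sum_distrib_left)
  apply (simp only: sum_subtractf[symmetric])
  apply (intro sum.cong refl)
  apply (simp add: sum_subtractf algebra_simps sum_distrib_left)
  done



lemma vec_self_zero: "w \<in> carrier_vec m \<Longrightarrow> w \<bullet> w = (0::real) \<Longrightarrow> w = 0\<^sub>v m"
proof -
  assume w: "w \<in> carrier_vec m" and z: "w \<bullet> w = 0"
  have "(\<Sum>i\<in>{0..<m}. w $ i * w $ i) = 0" using z w unfolding scalar_prod_def by simp
  hence "\<forall>i\<in>{0..<m}. w $ i * w $ i = 0" by (subst (asm) sum_nonneg_eq_0_iff) auto
  thus ?thesis using w by (intro eq_vecI) auto
qed

lemma full_rank_mult_zero:
  assumes L: "L \<in> carrier_mat n d" and fr: "full_col_rank L" and X: "X \<in> carrier_mat d m"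
    and LX: "L * X = 0\<^sub>m n m"
  shows "X = 0\<^sub>m d m"
proof (rule eq_matI)
  fix i j assume i: "i < dim_row (0\<^sub>m d m)" and j: "j < dim_col (0\<^sub>m d m)"
  have "L *\<^sub>v col X j = col (L * X) j" using col_mult2[OF L X, of j] j by simp
  also have "\<dots> = 0\<^sub>v n" using LX j by (auto simp: col_def)
  finally have "col X j = 0\<^sub>v d" using fr L X unfolding full_col_rank_def by auto
  hence "col X j $ i = 0" using i by simp
  thus "X $$ (i, j) = 0\<^sub>m d m $$ (i, j)" using i j X by auto
qed (use X in auto)

lemma gram_inv:
  assumes L: "L \<in> carrier_mat n d" and fr: "full_col_rank L"
  shows "\<exists>Mi \<in> carrier_mat d d. Mi * (L\<^sup>T * L) = 1\<^sub>m d \<and> (L\<^sup>T * L) * Mi = 1\<^sub>m d"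
proof -
  let ?M = "L\<^sup>T * L"
  have M: "?M \<in> carrier_mat d d" using L by auto
  have "det ?M \<noteq> 0"
  proof
    assume "det ?M = 0"
    then obtain v where v: "v \<in> carrier_vec d" "v \<noteq> 0\<^sub>v d" "?M *\<^sub>v v = 0\<^sub>v d"
      using det_0_iff_vec_prod_zero_field[OF M] by auto
    have "?M *\<^sub>v v = L\<^sup>T *\<^sub>v (L *\<^sub>v v)" using L v by (simp add: assoc_mult_mat_vec[of _ d n])
    hence z: "L\<^sup>T *\<^sub>v (L *\<^sub>v v) = 0\<^sub>v d" using v by simp
    have "0 = (L\<^sup>T *\<^sub>v (L *\<^sub>v v)) \<bullet> v" unfolding z using v(1) by simp
    also have "\<dots> = (L *\<^sub>v v) \<bullet> (L *\<^sub>v v)"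
      by (rule transpose_vec_mult_scalar[OF L v(1)]) (use L v(1) in \<open>auto intro!: mult_mat_vec_carrier\<close>)
    finally have "L *\<^sub>v v = 0\<^sub>v n" using vec_self_zero[of "L *\<^sub>v v" n] L v(1) by (auto intro!: mult_mat_vec_carrier)
    thus False using fr L v unfolding full_col_rank_def by auto
  qed
  from det_non_zero_imp_unit[OF M this, of undefined]
  show ?thesis unfolding Units_def ring_mat_simps by auto
qed

lemma pinv_full:
  assumes L: "L \<in> carrier_mat n d" and fr: "full_col_rank L"
  shows "pinv L \<in> carrier_mat d n \<and> pinv L * L = 1\<^sub>m d"
proof -
  obtain Mi where Mi: "Mi \<in> carrier_mat d d" and l: "Mi * (L\<^sup>T * L) = 1\<^sub>m d" and r: "(L\<^sup>T * L) * Mi = 1\<^sub>m d"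
    using gram_inv[OF L fr] by auto
  have LT: "L\<^sup>T \<in> carrier_mat d n" using L by auto
  have MiT: "Mi\<^sup>T = Mi"
  proof -
    have "Mi\<^sup>T * (L\<^sup>T * L) = ((L\<^sup>T * L)\<^sup>T * Mi)\<^sup>T"
      using Mi L by (simp add: transpose_mult_dim)
    also have "(L\<^sup>T * L)\<^sup>T = L\<^sup>T * L" using L by (simp add: transpose_mult_dim)
    finally have e: "Mi\<^sup>T * (L\<^sup>T * L) = 1\<^sub>m d" using r by simp
    have "Mi\<^sup>T = Mi\<^sup>T * ((L\<^sup>T * L) * Mi)" using r Mi by simp
    also have "\<dots> = Mi\<^sup>T * (L\<^sup>T * L) * Mi" using Mi L by (simp add: assoc_dim)
    also have "\<dots> = Mi" using e Mi by simp
    finally show ?thesis .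
  qed
  let ?P = "Mi * L\<^sup>T"
  have P: "?P \<in> carrier_mat d n" using Mi L by auto
  have PL: "?P * L = 1\<^sub>m d" using l Mi L by (simp add: assoc_dim)
  have c: "?P \<in> carrier_mat (dim_col L) (dim_row L) \<and> L * ?P * L = L \<and> ?P * L * ?P = ?P
               \<and> (L * ?P)\<^sup>T = L * ?P \<and> (?P * L)\<^sup>T = ?P * L"
  proof (intro conjI)
    show "?P \<in> carrier_mat (dim_col L) (dim_row L)" using P L by simp
    show "L * ?P * L = L" using PL L P by (simp add: assoc_dim)
    show "?P * L * ?P = ?P" using PL P by (metis left_mult_one_mat)
    show "(L * ?P)\<^sup>T = L * ?P" using L Mi MiT by (simp add: transpose_mult_dim assoc_dim)
    show "(?P * L)\<^sup>T = ?P * L" using PL by simp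
  qed
  have u: "Q = ?P" if q: "Q \<in> carrier_mat (dim_col L) (dim_row L) \<and> L * Q * L = L \<and> Q * L * Q = Q
               \<and> (L * Q)\<^sup>T = L * Q \<and> (Q * L)\<^sup>T = Q * L" for Q
  proof -
    have Q: "Q \<in> carrier_mat d n" using q L by simp
    have "L * (Q * L - 1\<^sub>m d) = L * Q * L - L * 1\<^sub>m d"
      using L Q by (simp add: mult_minus_distrib_mat[OF L, of _ d] assoc_dim)
    also have "\<dots> = 0\<^sub>m n d" using q L by simp
    finally have "Q * L - 1\<^sub>m d = 0\<^sub>m d d" using full_rank_mult_zero[OF L fr, of "Q * L - 1\<^sub>m d" d] L Q minus_carrier_mat[of "1\<^sub>m d" d d "Q * L"] by force
    hence QL: "Q * L = 1\<^sub>m d"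
    proof -
      assume h: "Q * L - 1\<^sub>m d = 0\<^sub>m d d"
      show ?thesis
      proof (rule eq_matI)
        fix i j assume ij: "i < dim_row (1\<^sub>m d)" "j < dim_col (1\<^sub>m d)"
        have "(Q * L - 1\<^sub>m d) $$ (i, j) = 0" using h ij by simp
        thus "(Q * L) $$ (i, j) = 1\<^sub>m d $$ (i, j)" using ij L Q by simp
      qed (use L Q in auto)
    qed
    have QLT: "L\<^sup>T * Q\<^sup>T = 1\<^sub>m d" using arg_cong[OF QL, of transpose_mat] L Q by (simp add: transpose_mult_dim)
    have "L\<^sup>T * L * Q = L\<^sup>T * (L * Q)" using L Q by (simp add: assoc_dim)
    also have "\<dots> = L\<^sup>T * (L * Q)\<^sup>T" using q by simp
    also have "\<dots> = L\<^sup>T * Q\<^sup>T * L\<^sup>T" using L Q by (simp add: transpose_mult_dim assoc_dim)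
    also have "\<dots> = L\<^sup>T" using QLT L by simp
    finally have e: "L\<^sup>T * L * Q = L\<^sup>T" .
    have "Q = Mi * (L\<^sup>T * L) * Q" using l Q by simp
    also have "\<dots> = Mi * (L\<^sup>T * L * Q)" using Mi L Q by (simp add: assoc_dim)
    finally show ?thesis using e by simp
  qed
  have "pinv L = ?P" unfolding pinv_def by (rule the_equality) (use c u in blast)+
  thus ?thesis using P PL by simp
qed



lemma pos_idx_lt: "i < n_pos n y y0 \<Longrightarrow> pos_idx n y y0 i < n"
proof -
  assume i: "i < n_pos n y y0"
  let ?S = "{k. k < n \<and> y k = y0}"
  have f: "finite ?S" by simp
  have "i < length (sorted_list_of_set ?S)" using i f unfolding n_pos_def by simp
  hence "sorted_list_of_set ?S ! i \<in> set (sorted_list_of_set ?S)" by (rule nth_mem)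
  thus ?thesis using f unfolding pos_idx_def by simp
qed

lemma cols_pos_eq:
  assumes L: "L \<in> carrier_mat n d"
  shows "cols_pos n y y0 (L * L\<^sup>T) = L * (rows_pos n y y0 L)\<^sup>T"
  using L pos_idx_lt[of _ n y y0]
  by (intro eq_matI) (auto simp: cols_pos_def rows_pos_def scalar_prod_def)

lemma FH_entry:
  assumes F: "F \<in> carrier_mat r n" and i: "i < r" and l: "l < n"
  shows "(F * centering n) $$ (i, l) = F $$ (i, l) - (1 / real n) * (\<Sum>k<n. F $$ (i, k))"
proof -
  have "(F * centering n) $$ (i, l) = (\<Sum>k<n. F $$ (i, k) * ((if k = l then 1 else 0) - 1 / real n))"
    using F i l by (simp add: scalar_prod_def centering_idx atLeast0LessThan)
  also have "\<dots> = (\<Sum>k<n. (if k = l then F $$ (i, k) else 0)) - (\<Sum>k<n. F $$ (i, k) * (1 / real n))"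
  proof -
    have "\<And>k. F $$ (i, k) * ((if k = l then 1 else 0) - 1 / real n) = (if k = l then F $$ (i, k) else 0) - F $$ (i, k) * (1 / real n)"
      by (simp add: right_diff_distrib)
    thus ?thesis by (simp only: sum_subtractf)
  qed
  also have "\<dots> = F $$ (i, l) - (1 / real n) * (\<Sum>k<n. F $$ (i, k))"
    using l by (simp add: sum_divide_distrib)
  finally show ?thesis .
qed

lemma emp_cov_mat:
  assumes F: "F \<in> carrier_mat r n" and i: "i < r" and j: "j < r"
  shows "emp_cov n (\<lambda>k. F $$ (i, k)) (\<lambda>k. F $$ (j, k)) = (1 / real n) * (F * centering n * F\<^sup>T) $$ (i, j)"
proof -
  have "(F * centering n * F\<^sup>T) $$ (i, j) = (\<Sum>l<n. (F * centering n) $$ (i, l) * F $$ (j, l))"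
    using F i j by (simp add: scalar_prod_def atLeast0LessThan)
  also have "\<dots> = (\<Sum>l<n. (F $$ (i, l) - (1 / real n) * (\<Sum>k<n. F $$ (i, k))) * F $$ (j, l))"
    using FH_entry[OF F i] by simp
  also have "\<dots> = (\<Sum>l<n. F $$ (i, l) * F $$ (j, l)) - (1 / real n) * (\<Sum>k<n. F $$ (i, k)) * (\<Sum>l<n. F $$ (j, l))"
    by (simp add: left_diff_distrib sum_subtractf sum_distrib_left mult.assoc)
  finally have X: "(F * centering n * F\<^sup>T) $$ (i, j) = (\<Sum>l<n. F $$ (i, l) * F $$ (j, l)) - (1 / real n) * (\<Sum>k<n. F $$ (i, k)) * (\<Sum>l<n. F $$ (j, l))" .
  show ?thesis unfolding emp_cov_def X by (simp add: algebra_simps)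
qed

lemma mult_smult_add_dim:
  fixes P X Y Q :: "real mat"
  assumes "dim_col P = dim_row X" "dim_row X = dim_row Y" "dim_col X = dim_col Y" "dim_col X = dim_row Q"
  shows "P * (a \<cdot>\<^sub>m X + b \<cdot>\<^sub>m Y) * Q = a \<cdot>\<^sub>m (P * X * Q) + b \<cdot>\<^sub>m (P * Y * Q)"
  using assms
  apply (intro eq_matI)
     apply (simp_all add: scalar_prod_def)
  apply (simp only: sum_distrib_left)
  apply (simp only: sum.distrib[symmetric])
  apply (intro sum.cong refl)
  apply (simp add: sum.distrib algebra_simps sum_distrib_left)
  done

lemma in_A_iff:
  assumes L: "L \<in> carrier_mat n d" and T: "\<Theta> \<in> carrier_mat r n" and K: "K = L * L\<^sup>T"
  shows "in_A n r \<gamma> K \<Theta> \<longleftrightarrow> (\<Theta> * L) * eo_B n \<gamma> L * (\<Theta> * L)\<^sup>T = 1\<^sub>m r"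
proof -
  have dL: "dim_row L = n" "dim_col L = d" using L by auto
  have dT: "dim_row \<Theta> = r" "dim_col \<Theta> = n" using T by auto
  have F: "\<Theta> * K \<in> carrier_mat r n" using L T K by auto
  have e1: "(\<Theta> * L) * eo_B n \<gamma> L * (\<Theta> * L)\<^sup>T
     = (1 / real n) \<cdot>\<^sub>m ((\<Theta> * L) * (L\<^sup>T * centering n * L) * (\<Theta> * L)\<^sup>T)
       + \<gamma> \<cdot>\<^sub>m ((\<Theta> * L) * 1\<^sub>m d * (\<Theta> * L)\<^sup>T)"
    unfolding eo_B_def dL(2) by (rule mult_smult_add_dim) (simp_all add: dL dT)
  have e2: "(\<Theta> * L) * (L\<^sup>T * centering n * L) * (\<Theta> * L)\<^sup>T = (\<Theta> * K) * centering n * (\<Theta> * K)\<^sup>T"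
    unfolding K by (simp add: assoc_dim transpose_mult_dim dL dT)
  have e3: "(\<Theta> * L) * 1\<^sub>m d * (\<Theta> * L)\<^sup>T = \<Theta> * K * \<Theta>\<^sup>T"
    unfolding K using L T by (simp add: assoc_dim transpose_mult_dim dL dT)
  have ent: "((\<Theta> * L) * eo_B n \<gamma> L * (\<Theta> * L)\<^sup>T) $$ (i, j) =
      emp_cov n (\<lambda>k. (\<Theta> * K) $$ (i, k)) (\<lambda>k. (\<Theta> * K) $$ (j, k)) + \<gamma> * (\<Theta> * K * \<Theta>\<^sup>T) $$ (i, j)"
    if ij: "i < r" "j < r" for i j
    unfolding e1 e2 e3 emp_cov_mat[OF F ij] using ij L T K by simp
  have dims: "dim_row ((\<Theta> * L) * eo_B n \<gamma> L * (\<Theta> * L)\<^sup>T) = r" "dim_col ((\<Theta> * L) * eo_B n \<gamma> L * (\<Theta> * L)\<^sup>T) = r"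
    by (simp_all add: dT)
  show ?thesis
  proof
    assume h: "in_A n r \<gamma> K \<Theta>"
    show "(\<Theta> * L) * eo_B n \<gamma> L * (\<Theta> * L)\<^sup>T = 1\<^sub>m r"
      by (rule eq_matI) (use h ent dims in \<open>auto simp: in_A_def\<close>)
  next
    assume h: "(\<Theta> * L) * eo_B n \<gamma> L * (\<Theta> * L)\<^sup>T = 1\<^sub>m r"
    show "in_A n r \<gamma> K \<Theta>" unfolding in_A_def
    proof (intro allI impI)
      fix i j assume "i < r" "j < r"
      thus "emp_cov n (\<lambda>k. (\<Theta> * K) $$ (i, k)) (\<lambda>k. (\<Theta> * K) $$ (j, k)) + \<gamma> * (\<Theta> * K * \<Theta>\<^sup>T) $$ (i, j)
          = (if i = j then 1 else 0)"
        using ent[of i j] h by simp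
    qed
  qed
qed



lemma obj_eq:
  assumes L: "L \<in> carrier_mat n d" and T: "\<Theta> \<in> carrier_mat r n" and K: "K = L * L\<^sup>T"
    and LY: "LY \<in> carrier_mat n p" and LS: "LS0 \<in> carrier_mat (n_pos n y y0) q"
  shows "eo_objective n y y0 lam K LY LS0 \<Theta> =
    mytr ((\<Theta> * L) * eo_A n y y0 lam L (LY * LY\<^sup>T) (LS0 * LS0\<^sup>T) * (\<Theta> * L)\<^sup>T)"
proof -
  let ?nz = "n_pos n y y0"
  let ?Lz = "rows_pos n y y0 L"
  let ?H = "centering n"
  let ?Hz = "centering ?nz"
  have dL: "dim_row L = n" "dim_col L = d" using L by auto
  have dT: "dim_row \<Theta> = r" "dim_col \<Theta> = n" using T by auto
  have dY: "dim_row LY = n" "dim_col LY = p" using LY by auto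
  have dS: "dim_row LS0 = ?nz" "dim_col LS0 = q" using LS by auto
  have d0: "dim_row ?Lz = ?nz" "dim_col ?Lz = d" using L by (auto simp: rows_pos_def)
  let ?X1 = "L\<^sup>T * ?H * (LY * LY\<^sup>T) * ?H * L"
  let ?X2 = "?Lz\<^sup>T * ?Hz * (LS0 * LS0\<^sup>T) * ?Hz * ?Lz"
  have t1: "frob_sq (\<Theta> * K * ?H * LY) = mytr ((\<Theta> * L) * ?X1 * (\<Theta> * L)\<^sup>T)"
    unfolding frob_tr K by (simp add: assoc_dim transpose_mult_dim dL dT dY)
  have t2: "frob_sq (\<Theta> * cols_pos n y y0 K * ?Hz * LS0) = mytr ((\<Theta> * L) * ?X2 * (\<Theta> * L)\<^sup>T)"
    unfolding frob_tr K cols_pos_eq[OF L] by (simp add: assoc_dim transpose_mult_dim dL dT dS d0)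
  have "(\<Theta> * L) * eo_A n y y0 lam L (LY * LY\<^sup>T) (LS0 * LS0\<^sup>T) * (\<Theta> * L)\<^sup>T
     = ((1 - lam) * (1 / (real n)\<^sup>2)) \<cdot>\<^sub>m ((\<Theta> * L) * ?X1 * (\<Theta> * L)\<^sup>T)
       - (lam * (1 / (real ?nz)\<^sup>2)) \<cdot>\<^sub>m ((\<Theta> * L) * ?X2 * (\<Theta> * L)\<^sup>T)"
    unfolding eo_A_def by (rule mult_smult_minus_dim) (simp_all add: dL dT dY dS d0)
  hence "mytr ((\<Theta> * L) * eo_A n y y0 lam L (LY * LY\<^sup>T) (LS0 * LS0\<^sup>T) * (\<Theta> * L)\<^sup>T)
     = ((1 - lam) * (1 / (real n)\<^sup>2)) * mytr ((\<Theta> * L) * ?X1 * (\<Theta> * L)\<^sup>T)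
       - (lam * (1 / (real ?nz)\<^sup>2)) * mytr ((\<Theta> * L) * ?X2 * (\<Theta> * L)\<^sup>T)"
    by (simp add: mytr_minus dL dT dY dS d0)
  thus ?thesis unfolding eo_objective_def t1 t2 by simp
qed



lemma weights_ineq:
  fixes \<tau> w :: "nat \<Rightarrow> real"
  assumes rd: "r \<le> d" and mono: "\<forall>i j. i \<le> j \<longrightarrow> j < d \<longrightarrow> \<tau> j \<le> \<tau> i"
    and w: "\<forall>j<d. 0 \<le> w j \<and> w j \<le> 1" and sw: "(\<Sum>j<d. w j) = real r"
  shows "(\<Sum>j<d. \<tau> j * w j) \<le> (\<Sum>j<r. \<tau> j)"
proof -
  define e where "e j = (if j < r then (1::real) else 0)" for j
  define c where "c = \<tau> (r - 1)"
  have se: "(\<Sum>j<d. f j * e j) = (\<Sum>j<r. f j)" for f :: "nat \<Rightarrow> real"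
  proof -
    have "(\<Sum>j<d. f j * e j) = (\<Sum>j\<in>{..<d}. if j \<in> {j. j < r} then f j else 0)"
      unfolding e_def by (intro sum.cong) auto
    also have "\<dots> = (\<Sum>j\<in>{..<d} \<inter> {j. j < r}. f j)" by (rule sum.inter_restrict[symmetric]) simp
    also have "{..<d} \<inter> {j. j < r} = {..<r}" using rd by auto
    finally show ?thesis .
  qed
  have key: "\<tau> j * w j - \<tau> j * e j \<le> c * w j - c * e j" if j: "j < d" for j
  proof (cases "j < r")
    case True
    hence "j \<le> r - 1" "r - 1 < d" using rd j by auto
    hence "c \<le> \<tau> j" unfolding c_def using mono by blast
    moreover have "w j - 1 \<le> 0" using w j by auto
    ultimately have "(\<tau> j - c) * (w j - 1) \<le> 0" by (simp add: mult_nonneg_nonpos)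
    thus ?thesis using True unfolding e_def by (simp add: algebra_simps)
  next
    case False
    hence "\<tau> j \<le> c" unfolding c_def using mono j by auto
    moreover have "0 \<le> w j" using w j by auto
    ultimately have "(\<tau> j - c) * w j \<le> 0" by (simp add: mult_nonpos_nonneg)
    thus ?thesis using False unfolding e_def by (simp add: algebra_simps)
  qed
  have "(\<Sum>j<d. \<tau> j * w j - \<tau> j * e j) \<le> (\<Sum>j<d. c * w j - c * e j)"
    by (rule sum_mono) (use key in auto)
  also have "\<dots> = c * (\<Sum>j<d. w j) - (\<Sum>j<d. c * e j)"
    by (simp add: sum_subtractf sum_distrib_left)
  also have "(\<Sum>j<d. c * e j) = (\<Sum>j<r. c)" by (rule se)
  finally have "(\<Sum>j<d. \<tau> j * w j) - (\<Sum>j<d. \<tau> j * e j) \<le> 0"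
    using sw by (simp add: sum_subtractf)
  thus ?thesis using se[of \<tau>] by simp
qed

lemma weights_bound:
  fixes C :: "real mat"
  assumes C: "C \<in> carrier_mat d r" and CC: "C\<^sup>T * C = 1\<^sub>m r"
  shows "\<forall>j<d. 0 \<le> (\<Sum>k<r. (C $$ (j, k))\<^sup>2) \<and> (\<Sum>k<r. (C $$ (j, k))\<^sup>2) \<le> 1"
    and "(\<Sum>j<d. (\<Sum>k<r. (C $$ (j, k))\<^sup>2)) = real r"
proof -
  let ?P = "C * C\<^sup>T"
  have Pe: "?P $$ (i, j) = (\<Sum>k<r. C $$ (i, k) * C $$ (j, k))" if "i < d" "j < d" for i j
    using C that by (simp add: scalar_prod_def atLeast0LessThan)
  have PP: "?P * ?P = ?P"
  proof -
    have "?P * ?P = C * (C\<^sup>T * C) * C\<^sup>T" using C by (simp add: assoc_dim)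
    thus ?thesis using CC C by simp
  qed
  show "\<forall>j<d. 0 \<le> (\<Sum>k<r. (C $$ (j, k))\<^sup>2) \<and> (\<Sum>k<r. (C $$ (j, k))\<^sup>2) \<le> 1"
  proof (intro allI impI conjI)
    fix j assume j: "j < d"
    show w0: "0 \<le> (\<Sum>k<r. (C $$ (j, k))\<^sup>2)" by (simp add: sum_nonneg)
    have wj: "?P $$ (j, j) = (\<Sum>k<r. (C $$ (j, k))\<^sup>2)" using Pe[OF j j] by (simp add: power2_eq_square)
    have "(?P * ?P) $$ (j, j) = (\<Sum>i<d. ?P $$ (j, i) * ?P $$ (i, j))"
      using C j by (simp add: scalar_prod_def atLeast0LessThan)
    also have "\<dots> = (\<Sum>i<d. (?P $$ (i, j))\<^sup>2)"
    proof (intro sum.cong refl)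
      fix i assume "i \<in> {..<d}"
      hence i: "i < d" by simp
      show "?P $$ (j, i) * ?P $$ (i, j) = (?P $$ (i, j))\<^sup>2"
        unfolding Pe[OF i j] Pe[OF j i] by (simp add: power2_eq_square mult.commute)
    qed
    also have "\<dots> \<ge> (?P $$ (j, j))\<^sup>2"
      by (rule member_le_sum[where f = "\<lambda>i. (?P $$ (i, j))\<^sup>2"]) (use j in auto)
    finally have "(?P $$ (j, j))\<^sup>2 \<le> ?P $$ (j, j)" using PP by simp
    hence h: "(\<Sum>k<r. (C $$ (j, k))\<^sup>2)\<^sup>2 \<le> (\<Sum>k<r. (C $$ (j, k))\<^sup>2)" using wj by simp
    show "(\<Sum>k<r. (C $$ (j, k))\<^sup>2) \<le> 1"
    proof (rule ccontr)
      let ?s = "(\<Sum>k<r. (C $$ (j, k))\<^sup>2)"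
      assume "\<not> ?s \<le> 1"
      hence s1: "1 < ?s" by simp
      hence "?s * 1 < ?s * ?s" by (intro mult_strict_left_mono) auto
      thus False using h by (simp add: power2_eq_square)
    qed
  qed
  have "(\<Sum>j<d. (\<Sum>k<r. (C $$ (j, k))\<^sup>2)) = (\<Sum>k<r. (\<Sum>j<d. (C $$ (j, k))\<^sup>2))" by (rule sum.swap)
  also have "\<dots> = (\<Sum>k<r. (C\<^sup>T * C) $$ (k, k))"
    using C by (intro sum.cong refl) (simp add: scalar_prod_def atLeast0LessThan power2_eq_square)
  also have "\<dots> = real r" using CC by simp
  finally show "(\<Sum>j<d. (\<Sum>k<r. (C $$ (j, k))\<^sup>2)) = real r" .
qed



lemma WXW_entry:
  fixes W X :: "real mat"
  assumes W: "W \<in> carrier_mat d d" and X: "X \<in> carrier_mat d d" and i: "i < d" and j: "j < d"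
  shows "(W\<^sup>T * X * W) $$ (i, j) = col W i \<bullet> (X *\<^sub>v col W j)"
proof -
  have "W\<^sup>T * X * W = W\<^sup>T * (X * W)" using W X by (simp add: assoc_dim)
  moreover have "(W\<^sup>T * (X * W)) $$ (i, j) = row W\<^sup>T i \<bullet> col (X * W) j" using W X i j by simp
  moreover have "row W\<^sup>T i = col W i" using W i by simp
  moreover have "col (X * W) j = X *\<^sub>v col W j" using col_mult2[OF X W j] .
  ultimately show ?thesis by simp
qed

lemma kyfan_core:
  fixes A B W \<Phi> :: "real mat" and \<tau> :: "nat \<Rightarrow> real"
  assumes A: "A \<in> carrier_mat d d" and B: "B \<in> carrier_mat d d" and W: "W \<in> carrier_mat d d"
    and WBW: "W\<^sup>T * B * W = 1\<^sub>m d" and eig: "\<forall>j<d. A *\<^sub>v col W j = \<tau> j \<cdot>\<^sub>v (B *\<^sub>v col W j)"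
    and Ph: "\<Phi> \<in> carrier_mat r d"
  shows "mytr (\<Phi> * A * \<Phi>\<^sup>T) = (\<Sum>j<d. \<tau> j * (\<Sum>k<r. ((W\<^sup>T * B * \<Phi>\<^sup>T) $$ (j, k))\<^sup>2))"
    and "\<Phi> * B * \<Phi>\<^sup>T = (W\<^sup>T * B * \<Phi>\<^sup>T)\<^sup>T * (W\<^sup>T * B * \<Phi>\<^sup>T)"
proof -
  define C where "C = W\<^sup>T * B * \<Phi>\<^sup>T"
  have C: "C \<in> carrier_mat d r" unfolding C_def using W B Ph by auto
  have WtB: "W\<^sup>T * B \<in> carrier_mat d d" using W B by auto
  have ri: "W * (W\<^sup>T * B) = 1\<^sub>m d" by (rule mat_mult_left_right_inverse[OF WtB W WBW])
  have PhT: "\<Phi>\<^sup>T = W * C"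
  proof -
    have "W * C = (W * (W\<^sup>T * B)) * \<Phi>\<^sup>T" unfolding C_def using W B Ph by (simp add: assoc_dim)
    thus ?thesis using ri Ph by simp
  qed
  have Phe: "\<Phi> = C\<^sup>T * W\<^sup>T"
  proof -
    have "\<Phi> = (\<Phi>\<^sup>T)\<^sup>T" by simp
    also have "\<dots> = (W * C)\<^sup>T" using PhT by simp
    also have "\<dots> = C\<^sup>T * W\<^sup>T" using W C by (simp add: transpose_mult_dim)
    finally show ?thesis .
  qed
  have gen: "\<Phi> * X * \<Phi>\<^sup>T = C\<^sup>T * (W\<^sup>T * X * W) * C" if X: "X \<in> carrier_mat d d" for X
  proof -
    have "\<Phi> * X * \<Phi>\<^sup>T = (C\<^sup>T * W\<^sup>T) * X * (W * C)"
      by (simp only: Phe[symmetric] PhT[symmetric])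
    also have "\<dots> = C\<^sup>T * (W\<^sup>T * X * W) * C" using W C X by (simp add: assoc_dim)
    finally show ?thesis .
  qed
  have De: "(W\<^sup>T * A * W) $$ (i, j) = (if i = j then \<tau> j else 0)" if ij: "i < d" "j < d" for i j
  proof -
    have "(W\<^sup>T * A * W) $$ (i, j) = col W i \<bullet> (A *\<^sub>v col W j)" by (rule WXW_entry[OF W A ij])
    also have "\<dots> = \<tau> j * (col W i \<bullet> (B *\<^sub>v col W j))" using eig ij W B by simp
    also have "col W i \<bullet> (B *\<^sub>v col W j) = (W\<^sup>T * B * W) $$ (i, j)" by (rule WXW_entry[OF W B ij, symmetric])
    also have "\<dots> = (if i = j then 1 else 0)" using WBW ij by simp
    finally show ?thesis by simp
  qed
  let ?D = "W\<^sup>T * A * W"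
  have CD: "(C\<^sup>T * ?D) $$ (k, l) = C $$ (l, k) * \<tau> l" if k: "k < r" and l: "l < d" for k l
  proof -
    have "(C\<^sup>T * ?D) $$ (k, l) = (\<Sum>i<d. C $$ (i, k) * ?D $$ (i, l))"
      using C W A k l by (simp add: scalar_prod_def atLeast0LessThan)
    also have "\<dots> = (\<Sum>i<d. if i = l then C $$ (i, k) * \<tau> l else 0)"
      by (intro sum.cong refl) (use De l in auto)
    also have "\<dots> = C $$ (l, k) * \<tau> l" using l by simp
    finally show ?thesis .
  qed
  have "mytr (\<Phi> * A * \<Phi>\<^sup>T) = mytr (C\<^sup>T * ?D * C)" using gen[OF A] by simp
  also have "\<dots> = (\<Sum>k<r. (C\<^sup>T * ?D * C) $$ (k, k))" unfolding mytr_def using C by simp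
  also have "\<dots> = (\<Sum>k<r. \<Sum>l<d. \<tau> l * (C $$ (l, k))\<^sup>2)"
  proof (intro sum.cong refl)
    fix k assume "k \<in> {..<r}"
    hence k: "k < r" by simp
    have "(C\<^sup>T * ?D * C) $$ (k, k) = (\<Sum>l<d. (C\<^sup>T * ?D) $$ (k, l) * C $$ (l, k))"
      using C W A k by (simp add: scalar_prod_def atLeast0LessThan)
    also have "\<dots> = (\<Sum>l<d. \<tau> l * (C $$ (l, k))\<^sup>2)"
      by (intro sum.cong refl) (simp add: CD k power2_eq_square)
    finally show "(C\<^sup>T * ?D * C) $$ (k, k) = (\<Sum>l<d. \<tau> l * (C $$ (l, k))\<^sup>2)" .
  qed
  also have "\<dots> = (\<Sum>l<d. \<Sum>k<r. \<tau> l * (C $$ (l, k))\<^sup>2)" by (rule sum.swap)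
  also have "\<dots> = (\<Sum>l<d. \<tau> l * (\<Sum>k<r. (C $$ (l, k))\<^sup>2))" by (simp add: sum_distrib_left)
  finally show "mytr (\<Phi> * A * \<Phi>\<^sup>T) = (\<Sum>j<d. \<tau> j * (\<Sum>k<r. ((W\<^sup>T * B * \<Phi>\<^sup>T) $$ (j, k))\<^sup>2))"
    unfolding C_def .
  have "\<Phi> * B * \<Phi>\<^sup>T = C\<^sup>T * 1\<^sub>m d * C" using gen[OF B] WBW by simp
  also have "\<dots> = C\<^sup>T * C" using C by simp
  finally show "\<Phi> * B * \<Phi>\<^sup>T = (W\<^sup>T * B * \<Phi>\<^sup>T)\<^sup>T * (W\<^sup>T * B * \<Phi>\<^sup>T)" unfolding C_def .
qed



theorem theorem1:
  fixes n d r p q :: nat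
    and K L LY LS0 U :: "real mat"
    and y :: "nat \<Rightarrow> 'b" and y0 :: 'b
    and lam \<gamma> :: real
  assumes "L \<in> carrier_mat n d" and "d \<le> n" and "full_col_rank L"
    and "K = L * L\<^sup>T"
    and "r \<le> d"
    and "LY \<in> carrier_mat n p"
    and "LS0 \<in> carrier_mat (n_pos n y y0) q"
    and "0 \<le> lam" and "lam < 1" and "\<gamma> > 0"
    and "top_gen_eigvecs r (eo_A n y y0 lam L (LY * LY\<^sup>T) (LS0 * LS0\<^sup>T)) (eo_B n \<gamma> L) U"
  shows "in_A n r \<gamma> K (U\<^sup>T * pinv L)
    \<and> (\<forall>\<Theta> \<in> carrier_mat r n. in_A n r \<gamma> K \<Theta> \<longrightarrow>
          eo_objective n y y0 lam K LY LS0 \<Theta> \<le> eo_objective n y y0 lam K LY LS0 (U\<^sup>T * pinv L))"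
proof -
  note L = assms(1) and fr = assms(3) and K = assms(4) and rd = assms(5) and LY = assms(6) and LS = assms(7)
  let ?A = "eo_A n y y0 lam L (LY * LY\<^sup>T) (LS0 * LS0\<^sup>T)"
  let ?B = "eo_B n \<gamma> L"
  have dL: "dim_row L = n" "dim_col L = d" using L by auto
  have d0: "dim_col (rows_pos n y y0 L) = d" unfolding rows_pos_def using dL by simp
  have dA: "dim_row ?A = d" "dim_col ?A = d" unfolding eo_A_def index_minus_mat(2,3) index_smult_mat(2,3)
      index_mult_mat(2,3) index_transpose_mat(2,3) d0 by (rule refl)+
  have A: "?A \<in> carrier_mat d d" using dA by (rule carrier_matI)
  have dB: "dim_row ?B = d" "dim_col ?B = d" unfolding eo_B_def index_add_mat(2,3) index_smult_mat(2,3)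
      index_one_mat(2,3) dL by (rule refl)+
  have B: "?B \<in> carrier_mat d d" using dB by (rule carrier_matI)
  obtain W \<tau> where W: "W \<in> carrier_mat d d" and WBW: "W\<^sup>T * ?B * W = 1\<^sub>m d"
    and eig: "\<forall>j<d. ?A *\<^sub>v col W j = \<tau> j \<cdot>\<^sub>v (?B *\<^sub>v col W j)"
    and mono: "\<forall>i j. i \<le> j \<longrightarrow> j < d \<longrightarrow> \<tau> j \<le> \<tau> i"
    and Ud: "U = mat d r (\<lambda>(i, j). W $$ (i, j))"
    using assms(11) unfolding top_gen_eigvecs_def Let_def dA(1) by blast
  define E where "E = mat d r (\<lambda>(i, j). if i = j then 1 else (0::real))"
  have E: "E \<in> carrier_mat d r" unfolding E_def by simp
  have UWE: "U = W * E"
  proof (rule eq_matI)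
    fix i j assume i: "i < dim_row (W * E)" and j: "j < dim_col (W * E)"
    have ij: "i < d" "j < r" using i j W E by auto
    have "(W * E) $$ (i, j) = (\<Sum>l<d. W $$ (i, l) * (if l = j then 1 else 0))"
      using W E ij unfolding E_def by (simp add: scalar_prod_def atLeast0LessThan)
    also have "\<dots> = (\<Sum>l<d. if l = j then W $$ (i, l) else 0)" by (intro sum.cong refl) auto
    also have "\<dots> = W $$ (i, j)" using ij rd by simp
    finally show "U $$ (i, j) = (W * E) $$ (i, j)" using Ud ij by simp
  qed (use Ud W E in auto)
  have Uc: "U \<in> carrier_mat d r" using Ud by simp
  have UT: "U\<^sup>T \<in> carrier_mat r d" using Uc by simp
  have CU: "W\<^sup>T * ?B * (U\<^sup>T)\<^sup>T = E"
  proof -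
    have "W\<^sup>T * ?B * (U\<^sup>T)\<^sup>T = (W\<^sup>T * ?B * W) * E" unfolding transpose_transpose UWE
      using W B E by (simp add: assoc_dim)
    thus ?thesis using WBW E by simp
  qed
  have ETE: "E\<^sup>T * E = 1\<^sub>m r"
  proof (rule eq_matI)
    fix i j assume i: "i < dim_row (1\<^sub>m r)" and j: "j < dim_col (1\<^sub>m r)"
    have ij: "i < r" "j < r" using i j by auto
    have "(E\<^sup>T * E) $$ (i, j) = (\<Sum>l<d. (if l = i then 1 else 0) * (if l = j then 1 else (0::real)))"
      using E ij unfolding E_def by (simp add: scalar_prod_def atLeast0LessThan)
    also have "\<dots> = (\<Sum>l<d. if l = i then (if i = j then 1 else 0) else 0)" by (intro sum.cong refl) auto
    also have "\<dots> = (if i = j then 1 else 0)" using ij rd by simp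
    finally show "(E\<^sup>T * E) $$ (i, j) = 1\<^sub>m r $$ (i, j)" using ij by simp
  qed (use E in auto)
  have UBU: "U\<^sup>T * ?B * (U\<^sup>T)\<^sup>T = 1\<^sub>m r"
    using kyfan_core(2)[OF A B W WBW eig UT] CU ETE by simp
  have sumE: "(\<Sum>j<d. \<tau> j * (\<Sum>k<r. (E $$ (j, k))\<^sup>2)) = (\<Sum>j<r. \<tau> j)"
  proof -
    have "(\<Sum>j<d. \<tau> j * (\<Sum>k<r. (E $$ (j, k))\<^sup>2)) = (\<Sum>j\<in>{..<d}. if j \<in> {j. j < r} then \<tau> j else 0)"
    proof (intro sum.cong refl)
      fix j assume "j \<in> {..<d}"
      hence j: "j < d" by simp
      have "(\<Sum>k<r. (E $$ (j, k))\<^sup>2) = (\<Sum>k<r. if k = j then 1 else 0)"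
        using j unfolding E_def by (intro sum.cong refl) auto
      also have "\<dots> = (if j < r then 1 else 0)" by simp
      finally show "\<tau> j * (\<Sum>k<r. (E $$ (j, k))\<^sup>2) = (if j \<in> {j. j < r} then \<tau> j else 0)" by simp
    qed
    also have "\<dots> = (\<Sum>j\<in>{..<d} \<inter> {j. j < r}. \<tau> j)" by (rule sum.inter_restrict[symmetric]) simp
    also have "{..<d} \<inter> {j. j < r} = {..<r}" using rd by auto
    finally show ?thesis .
  qed
  have trU: "mytr (U\<^sup>T * ?A * (U\<^sup>T)\<^sup>T) = (\<Sum>j<r. \<tau> j)"
    using kyfan_core(1)[OF A B W WBW eig UT] CU sumE by simp
  obtain P where P: "P \<in> carrier_mat d n" and PL: "P * L = 1\<^sub>m d" and Pd: "pinv L = P"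
    using pinv_full[OF L fr] by blast
  have To: "U\<^sup>T * pinv L \<in> carrier_mat r n" using UT P Pd by simp
  have ToL: "U\<^sup>T * pinv L * L = U\<^sup>T"
  proof -
    have "U\<^sup>T * pinv L * L = U\<^sup>T * (P * L)" unfolding Pd using UT P L by (simp add: assoc_dim)
    thus ?thesis using PL UT by simp
  qed
  have part1: "in_A n r \<gamma> K (U\<^sup>T * pinv L)"
    unfolding in_A_iff[OF L To K] ToL using UBU .
  have objopt: "eo_objective n y y0 lam K LY LS0 (U\<^sup>T * pinv L) = (\<Sum>j<r. \<tau> j)"
    unfolding obj_eq[OF L To K LY LS] ToL using trU .
  have part2: "eo_objective n y y0 lam K LY LS0 \<Theta> \<le> eo_objective n y y0 lam K LY LS0 (U\<^sup>T * pinv L)"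
    if T: "\<Theta> \<in> carrier_mat r n" and inA: "in_A n r \<gamma> K \<Theta>" for \<Theta>
  proof -
    have Ph: "\<Theta> * L \<in> carrier_mat r d" using T L by simp
    have c1: "(\<Theta> * L) * ?B * (\<Theta> * L)\<^sup>T = 1\<^sub>m r" using inA in_A_iff[OF L T K] by simp
    let ?C = "W\<^sup>T * ?B * (\<Theta> * L)\<^sup>T"
    have C: "?C \<in> carrier_mat d r" using W B Ph by simp
    have CC: "?C\<^sup>T * ?C = 1\<^sub>m r" using kyfan_core(2)[OF A B W WBW eig Ph] c1 by simp
    have "eo_objective n y y0 lam K LY LS0 \<Theta> = mytr ((\<Theta> * L) * ?A * (\<Theta> * L)\<^sup>T)"
      by (rule obj_eq[OF L T K LY LS])
    also have "\<dots> = (\<Sum>j<d. \<tau> j * (\<Sum>k<r. (?C $$ (j, k))\<^sup>2))"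
      by (rule kyfan_core(1)[OF A B W WBW eig Ph])
    also have "\<dots> \<le> (\<Sum>j<r. \<tau> j)"
      by (rule weights_ineq[OF rd mono weights_bound[OF C CC]])
    finally show ?thesis using objopt by simp
  qed
  show ?thesis using part1 part2 by blast
qed

end
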